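(* Let $G$ be a topological group, $A$ a topological $G$-module and $f\in C_c^n(G,A)$ a continuous homogeneous group $n$-cocycle (i.e. $df=0$). Then $j_v^n(f)$ and $j_h^n(i^n(f))$ are cohomologous in $\mathrm{Tot}\,A_{lc}^{*,*}(G,A)^G$, where $i^n\colon C_c^n(G,A)\hookrightarrow C_{lc}^n(G,A)$ is the inclusion.
   Context: A topological $G$-module is an abelian topological group $A$ with an action of $G$ by group automorphisms such that $G\times A\to A$ is continuous. For an identity neighbourhood $U$ of $G$ put $\Gamma_U^0:=G$ and, for $q\ge1$, $\Gamma_U^q:=\{(g_0,\dots,g_q)\in G^{q+1}\mid g_i^{-1}g_j\in U\ \forall i,j\}$. $G$ acts on maps $f\colon G^{n+1}\to A$ by $(g.f)(g_0,\dots,g_n)=g.f(g^{-1}g_0,\dots,g^{-1}g_n)$, and $df(g_0,\dots,g_{n+1})=\sum_i(-1)^if(g_0,\dots,\widehat{g_i},\dots,g_{n+1})$. $C_c^n(G,A)$ consists of continuous equivariant maps $G^{n+1}\to A$; $C_{lc}^n(G,A)$ of equivariant maps whose restriction to $\Gamma_U^n$ is continuous for some identity neighbourhood $U$. $A_{lc}^{p,q}(G,A)$ is the group of maps $f\colon G^{p+1}\times G^{q+1}\to A$ whose restriction to $G^{p+1}\times\Gamma_U^q$ is continuous for some identity neighbourhood $U$, with $d_hf(x_0,\dots,x_{p+1},\vec y)=\sum_i(-1)^if(x_0,\dots,\widehat{x_i},\dots,x_{p+1},\vec y)$ and $d_vf(\vec x,y_0,\dots,y_{q+1})=(-1)^p\sum_i(-1)^if(\vec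 x,y_0,\dots,\widehat{y_i},\dots,y_{q+1})$. $G$ acts by $(g.f)(\vec x,\vec y)=g.f(g^{-1}\vec x,g^{-1}\vec y)$, and $\mathrm{Tot}\,A_{lc}^{*,*}(G,A)^G$ is the total complex of the fixed-point double complex, $\mathrm{Tot}^n=\bigoplus_{p+q=n}A_{lc}^{p,q}(G,A)^G$ with differential $d_h+d_v$. The maps $j_h^n\colon C_{lc}^n(G,A)\to A_{lc}^{0,n}(G,A)^G$, $j_h(f)(x_0,\vec y)=f(\vec y)$, and $j_v^n\colon C_c^n(G,A)\to A_{lc}^{n,0}(G,A)^G$, $j_v(f)(\vec x,y_0)=f(\vec x)$, are chain maps into the total complex. *)

theory Defs
  imports "HOL-Analysis.Analysis"
begin

text \<open>The topological group G is a type of class topological_group_add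
 (a possibly NON-commutative group written additively: g h is g + h, g^-1 is - g,
 the identity is 0).
 A tuple (g_0,...,g_n) in G^(n+1) is an extensional function with domain {..n},
 i.e. an element of tup n = PiE {..n} (%_. UNIV), carrying the product topology.\<close>

definition topological_G_module :: "('g::topological_group_add \<Rightarrow> 'a::topological_ab_group_add \<Rightarrow> 'a) \<Rightarrow> bool" where
  "topological_G_module act \<longleftrightarrow>
     (\<forall>a. act 0 a = a) \<and>
     (\<forall>g h a. act (g + h) a = act g (act h a)) \<and>
     (\<forall>g a b. act g (a + b) = act g a + act g b) \<and>
     continuous_on UNIV (\<lambda>p. act (fst p) (snd p))"

definition tup :: "nat \<Rightarrow> (nat \<Rightarrow> 'g) set" where
  "tup n = PiE {..n} (\<lambda>_. UNIV)"

definition tuptop :: "nat \<Rightarrow> (nat \<Rightarrow> 'g::topological_space) topology" where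
  "tuptop n = product_topology (\<lambda>_. euclidean) {..n}"

definition id_nbhd :: "'g::topological_group_add set \<Rightarrow> bool" where
  "id_nbhd U \<longleftrightarrow> (\<exists>V. open V \<and> 0 \<in> V \<and> V \<subseteq> U)"

definition Gamma :: "'g::group_add set \<Rightarrow> nat \<Rightarrow> (nat \<Rightarrow> 'g) set" where
  "Gamma U q = (if q = 0 then tup 0
                else {x \<in> tup q. \<forall>i\<le>q. \<forall>j\<le>q. - x i + x j \<in> U})"

definition shift :: "nat \<Rightarrow> 'g::group_add \<Rightarrow> (nat \<Rightarrow> 'g) \<Rightarrow> (nat \<Rightarrow> 'g)" where
  "shift n h x = restrict (\<lambda>k. h + x k) {..n}"

definition face :: "nat \<Rightarrow> nat \<Rightarrow> (nat \<Rightarrow> 'g) \<Rightarrow> (nat \<Rightarrow> 'g)" where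
  "face n i x = restrict (\<lambda>k. if k < i then x k else x (Suc k)) {..n}"

definition sgn_pow :: "nat \<Rightarrow> 'a::ab_group_add \<Rightarrow> 'a" where
  "sgn_pow i a = (if even i then a else - a)"

definition hdiff :: "nat \<Rightarrow> ((nat \<Rightarrow> 'g) \<Rightarrow> 'a::ab_group_add) \<Rightarrow> (nat \<Rightarrow> 'g) \<Rightarrow> 'a" where
  "hdiff n f x = (\<Sum>i\<le>Suc n. sgn_pow i (f (face n i x)))"

definition Cc :: "('g::topological_group_add \<Rightarrow> 'a::topological_ab_group_add \<Rightarrow> 'a) \<Rightarrow> nat
                  \<Rightarrow> ((nat \<Rightarrow> 'g) \<Rightarrow> 'a) set" where
  "Cc act n = {f. continuous_map (tuptop n) euclidean f \<and>
                  (\<forall>g. \<forall>x\<in>tup n. act g (f (shift n (- g) x)) = f x)}"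

definition Clc :: "('g::topological_group_add \<Rightarrow> 'a::topological_ab_group_add \<Rightarrow> 'a) \<Rightarrow> nat
                  \<Rightarrow> ((nat \<Rightarrow> 'g) \<Rightarrow> 'a) set" where
  "Clc act n = {f. (\<exists>U. id_nbhd U \<and>
                      continuous_map (subtopology (tuptop n) (Gamma U n)) euclidean f) \<and>
                  (\<forall>g. \<forall>x\<in>tup n. act g (f (shift n (- g) x)) = f x)}"

definition incl :: "((nat \<Rightarrow> 'g) \<Rightarrow> 'a) \<Rightarrow> ((nat \<Rightarrow> 'g) \<Rightarrow> 'a)" where
  "incl f = f"

type_synonym ('g,'a) dcochain = "(nat \<Rightarrow> 'g) \<Rightarrow> (nat \<Rightarrow> 'g) \<Rightarrow> 'a"

definition Alc_inv :: "('g::topological_group_add \<Rightarrow> 'a::topological_ab_group_add \<Rightarrow> 'a)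
                        \<Rightarrow> nat \<Rightarrow> nat \<Rightarrow> ('g,'a) dcochain set" where
  "Alc_inv act p q = {f. (\<exists>U. id_nbhd U \<and>
        continuous_map (subtopology (prod_topology (tuptop p) (tuptop q)) (tup p \<times> Gamma U q))
                       euclidean (\<lambda>z. f (fst z) (snd z))) \<and>
        (\<forall>g. \<forall>x\<in>tup p. \<forall>y\<in>tup q. act g (f (shift p (- g) x) (shift q (- g) y)) = f x y)}"

definition d_h :: "nat \<Rightarrow> ('g,'a::ab_group_add) dcochain \<Rightarrow> ('g,'a) dcochain" where
  "d_h p f x y = (\<Sum>i\<le>Suc p. sgn_pow i (f (face p i x) y))"

definition d_v :: "nat \<Rightarrow> nat \<Rightarrow> ('g,'a::ab_group_add) dcochain \<Rightarrow> ('g,'a) dcochain" where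
  "d_v p q f x y = sgn_pow p (\<Sum>i\<le>Suc q. sgn_pow i (f x (face q i y)))"

definition Tot :: "('g::topological_group_add \<Rightarrow> 'a::topological_ab_group_add \<Rightarrow> 'a)
                   \<Rightarrow> nat \<Rightarrow> (nat \<Rightarrow> ('g,'a) dcochain) set" where
  "Tot act n = {c. \<forall>p\<le>n. c p \<in> Alc_inv act p (n - p)}"

definition totD :: "nat \<Rightarrow> (nat \<Rightarrow> ('g,'a::ab_group_add) dcochain) \<Rightarrow> (nat \<Rightarrow> ('g,'a) dcochain)" where
  "totD n c p = (\<lambda>x y. (if p = 0 then 0 else d_h (p - 1) (c (p - 1)) x y)
                     + (if p \<le> n then d_v p (n - p) (c p) x y else 0))"

definition j_h :: "nat \<Rightarrow> ((nat \<Rightarrow> 'g) \<Rightarrow> 'a::ab_group_add) \<Rightarrow> (nat \<Rightarrow> ('g,'a) dcochain)" where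
  "j_h n f p = (if p = 0 then (\<lambda>x y. f y) else (\<lambda>x y. 0))"

definition j_v :: "nat \<Rightarrow> ((nat \<Rightarrow> 'g) \<Rightarrow> 'a::ab_group_add) \<Rightarrow> (nat \<Rightarrow> ('g,'a) dcochain)" where
  "j_v n f p = (if p = n then (\<lambda>x y. f x) else (\<lambda>x y. 0))"

text \<open>Two elements of Tot^n are cohomologous if their difference is D of an element of
 Tot^(n-1) (with Tot^(-1) = 0).  Components are compared on their domains
 G^(p+1) x G^(n-p+1).\<close>
definition cohomologous :: "('g::topological_group_add \<Rightarrow> 'a::topological_ab_group_add \<Rightarrow> 'a)
                   \<Rightarrow> nat \<Rightarrow> (nat \<Rightarrow> ('g,'a) dcochain) \<Rightarrow> (nat \<Rightarrow> ('g,'a) dcochain) \<Rightarrow> bool" where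
  "cohomologous act n a b \<longleftrightarrow>
     (if n = 0 then (\<forall>x\<in>tup 0. \<forall>y\<in>tup 0. a 0 x y = b 0 x y)
      else (\<exists>c\<in>Tot act (n - 1). \<forall>p\<le>n. \<forall>x\<in>tup p. \<forall>y\<in>tup (n - p).
              a p x y - b p x y = totD (n - 1) c p x y))"

end

theory Submission
  imports Defs
begin

lemma sgn_pow_0[simp]: "sgn_pow 0 a = a" by (simp add: sgn_pow_def)
lemma sgn_pow_Suc: "sgn_pow (Suc i) a = - sgn_pow i a" by (simp add: sgn_pow_def)
lemma sgn_pow_add: "sgn_pow (i + j) (a::'a::ab_group_add) = sgn_pow i (sgn_pow j a)"
  by (simp add: sgn_pow_def)
lemma sgn_pow_uminus: "sgn_pow i (- (a::'a::ab_group_add)) = - sgn_pow i a"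
  by (simp add: sgn_pow_def)
lemma sgn_pow_plus: "sgn_pow i ((a::'a::ab_group_add) + b) = sgn_pow i a + sgn_pow i b"
  by (simp add: sgn_pow_def)
lemma sgn_pow_sum: "sgn_pow i (sum g S) = (\<Sum>x\<in>S. sgn_pow i (g x :: 'a::ab_group_add))"
  by (simp add: sgn_pow_def sum_negf)
lemma sgn_pow_comm: "sgn_pow i (sgn_pow j (a::'a::ab_group_add)) = sgn_pow j (sgn_pow i a)"
  by (simp add: sgn_pow_def)
lemma sgn_pow_zero[simp]: "sgn_pow i (0::'a::ab_group_add) = 0"
  by (simp add: sgn_pow_def)
lemma sgn_pow_eq0: "sgn_pow i (a::'a::ab_group_add) = 0 \<longleftrightarrow> a = 0"
  by (simp add: sgn_pow_def)

lemma sum_split_at: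
  fixes g :: "nat \<Rightarrow> 'a::ab_group_add"
  assumes "p \<le> n"
  shows "(\<Sum>j\<le>Suc n. g j) = (\<Sum>j\<le>p. g j) + (\<Sum>i\<le>n-p. g (Suc p + i))"
proof -
  obtain k where n: "n = p + k" using assms le_Suc_ex by blast
  have "(\<Sum>j\<le>Suc (p + k). g j) = (\<Sum>j\<le>p. g j) + (\<Sum>i\<le>k. g (Suc p + i))"
    by (induction k) (simp_all add: add.assoc)
  then show ?thesis using n by simp
qed

definition cat :: "nat \<Rightarrow> nat \<Rightarrow> (nat \<Rightarrow> 'g) \<Rightarrow> (nat \<Rightarrow> 'g) \<Rightarrow> (nat \<Rightarrow> 'g)" where
  "cat p q x y = restrict (\<lambda>k. if k \<le> p then x k else y (k - Suc p)) {..p+q+1}"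

lemma cat_tup: "cat p q x y \<in> tup (p + q + 1)"
  by (simp add: cat_def tup_def)

lemma face_cat_left:
  assumes "m = p + q + 1" "i \<le> Suc p"
  shows "cat p q (face p i x) y = face m i (cat (Suc p) q x y)"
  using assms by (auto simp: cat_def face_def fun_eq_iff)

lemma face_cat_right:
  assumes "m = p + q + 1" "i \<le> Suc q"
  shows "cat p q x (face q i y) = face m (Suc p + i) (cat p (Suc q) x y)"
  using assms by (auto simp: cat_def face_def fun_eq_iff intro!: arg_cong[where f=y])

lemma face_cat_0:
  assumes "y \<in> tup n"
  shows "face n 0 (cat 0 n x y) = y"
  using assms by (auto simp: cat_def face_def fun_eq_iff tup_def PiE_def extensional_def)

lemma face_cat_last:
  assumes "x \<in> tup n"
  shows "face n (Suc n) (cat n 0 x y) = x"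
  using assms by (auto simp: cat_def face_def fun_eq_iff tup_def PiE_def extensional_def)

lemma shift_cat:
  "shift (p + q + 1) h (cat p q x y) = cat p q (shift p h x) (shift q h y)"
  by (auto simp: cat_def shift_def fun_eq_iff)

lemma cat_cont:
  "continuous_map (prod_topology (tuptop p) (tuptop q)) (tuptop (p + q + 1))
     (\<lambda>z. cat p q (fst z) (snd z))"
  unfolding tuptop_def
proof (subst continuous_map_componentwise, intro conjI ballI)
  show "(\<lambda>z. cat p q (fst z) (snd z)) ` topspace (prod_topology (product_topology (\<lambda>_. euclidean) {..p}) (product_topology (\<lambda>_. euclidean) {..q}))
    \<subseteq> extensional {..p + q + 1}"
    by (auto simp: cat_def)
next
  fix k assume k: "k \<in> {..p + q + 1}"
  show "continuous_map (prod_topology (product_topology (\<lambda>_. euclidean) {..p}) (product_topology (\<lambda>_. euclidean) {..q}))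
          euclidean (\<lambda>z. cat p q (fst z) (snd z) k)"
  proof (cases "k \<le> p")
    case True
    then have "(\<lambda>z. cat p q (fst z) (snd z) k) = (\<lambda>x. x k) \<circ> fst"
      using k by (auto simp: cat_def)
    show ?thesis
      by (rule continuous_map_eq[OF continuous_map_compose[OF continuous_map_fst continuous_map_product_projection]])
         (use True k in \<open>auto simp: cat_def\<close>)
  next
    case False
    then have "(\<lambda>z. cat p q (fst z) (snd z) k) = (\<lambda>x. x (k - Suc p)) \<circ> snd"
      using k by (auto simp: cat_def)
    show ?thesis
      by (rule continuous_map_eq[OF continuous_map_compose[OF continuous_map_snd continuous_map_product_projection, of "k - Suc p"]])
         (use False k in \<open>auto simp: cat_def\<close>)
  qed
qed

lemma sgn_pow_cont:
  fixes g :: "'b \<Rightarrow> 'a::topological_ab_group_add"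
  assumes "continuous_map X euclidean g"
  shows "continuous_map X euclidean (\<lambda>z. sgn_pow i (g z))"
proof (cases "even i")
  case True then show ?thesis using assms by (simp add: sgn_pow_def)
next
  case False
  have "continuous_map X euclidean (uminus \<circ> g)"
    by (rule continuous_map_compose[OF assms]) (simp add: continuous_on_minus continuous_on_id)
  then show ?thesis using False by (simp add: sgn_pow_def o_def)
qed

lemma act_lemmas:
  assumes "topological_G_module act"
  shows "act g 0 = 0" "act g (- a) = - act g a" "act g (sgn_pow i a) = sgn_pow i (act g a)"
proof -
  have add: "\<And>a b. act g (a + b) = act g a + act g b" using assms by (simp add: topological_G_module_def)
  have "act g 0 = act g 0 + act g 0" using add[of 0 0] by simp
  then show z: "act g 0 = 0" by simp
  have "act g a + act g (-a) = 0" using add[of a "-a"] z by simp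
  then show n: "act g (- a) = - act g a" by (simp add: eq_neg_iff_add_eq_0 add.commute)
  show "act g (sgn_pow i a) = sgn_pow i (act g a)" by (simp add: sgn_pow_def n)
qed


theorem mainTheorem4:
  fixes act :: "'g::topological_group_add \<Rightarrow> 'a::topological_ab_group_add \<Rightarrow> 'a"
    and f :: "(nat \<Rightarrow> 'g) \<Rightarrow> 'a"
    and n :: nat
  assumes "topological_G_module act"
    and "f \<in> Cc act n"
    and "\<forall>x\<in>tup (Suc n). hdiff n f x = 0"
  shows "cohomologous act n (j_v n f) (j_h n (incl f))"
proof (cases "n = 0")
  case True
  show ?thesis
  proof (simp add: cohomologous_def True j_v_def j_h_def incl_def, intro ballI)
    fix x y :: "nat \<Rightarrow> 'g" assume x: "x \<in> tup 0" and y: "y \<in> tup 0"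
    have "cat 0 0 x y \<in> tup (Suc 0)" using cat_tup[of 0 0 x y] by simp
    then have "hdiff 0 f (cat 0 0 x y) = 0" using assms(3) True by auto
    moreover have "hdiff 0 f (cat 0 0 x y) = f y - f x"
      using face_cat_0[OF y, of x] face_cat_last[OF x, of y]
      by (simp add: hdiff_def sgn_pow_def)
    ultimately show "f x = f y" by simp
  qed
next
  case False
  then obtain m where n: "n = Suc m" using not0_implies_Suc by blast
  have fcont: "continuous_map (tuptop n) euclidean f"
    and feq: "\<And>g x. x \<in> tup n \<Longrightarrow> act g (f (shift n (- g) x)) = f x"
    using assms(2) by (auto simp: Cc_def)
  define c where "c = (\<lambda>p x y. sgn_pow (Suc p) (f (cat p (m - p) x y)))"
  have cT: "c \<in> Tot act m"
    unfolding Tot_def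
  proof (intro CollectI allI impI)
    fix p assume p: "p \<le> m"
    have pq: "p + (m - p) + 1 = n" using p n by simp
    have cont: "continuous_map (prod_topology (tuptop p) (tuptop (m - p))) euclidean
                  (\<lambda>z. c p (fst z) (snd z))"
    proof -
      have "continuous_map (prod_topology (tuptop p) (tuptop (m - p))) euclidean
              (f \<circ> (\<lambda>z. cat p (m - p) (fst z) (snd z)))"
        using continuous_map_compose[OF cat_cont[of p "m - p"], of euclidean f] fcont pq by simp
      from sgn_pow_cont[OF this, of "Suc p"] show ?thesis by (simp add: c_def o_def)
    qed
    have "id_nbhd (UNIV::'g set)" by (auto simp: id_nbhd_def)
    moreover have "continuous_map (subtopology (prod_topology (tuptop p) (tuptop (m - p)))
                    (tup p \<times> Gamma UNIV (m - p))) euclidean (\<lambda>z. c p (fst z) (snd z))"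
      by (rule continuous_map_from_subtopology[OF cont])
    moreover have "\<forall>g. \<forall>x\<in>tup p. \<forall>y\<in>tup (m - p).
        act g (c p (shift p (- g) x) (shift (m - p) (- g) y)) = c p x y"
    proof (intro allI ballI)
      fix g and x y :: "nat \<Rightarrow> 'g"
      have "act g (c p (shift p (- g) x) (shift (m - p) (- g) y))
            = sgn_pow (Suc p) (act g (f (shift n (- g) (cat p (m - p) x y))))"
        unfolding c_def shift_cat[symmetric] pq act_lemmas(3)[OF assms(1)] ..
      also have "\<dots> = c p x y"
        unfolding c_def using feq cat_tup[of p "m - p" x y] pq by simp
      finally show "act g (c p (shift p (- g) x) (shift (m - p) (- g) y)) = c p x y" .
    qed
    ultimately show "c p \<in> Alc_inv act p (m - p)"
      unfolding Alc_inv_def by blast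
  qed
  have main: "\<forall>p\<le>n. \<forall>x\<in>tup p. \<forall>y\<in>tup (n - p).
      j_v n f p x y - j_h n (incl f) p x y = totD m c p x y"
  proof (intro allI impI ballI)
    fix p and x y :: "nat \<Rightarrow> 'g" assume p: "p \<le> n" and x: "x \<in> tup p" and y: "y \<in> tup (n - p)"
    define z where "z = cat p (n - p) x y"
    define F where "F i = f (face n i z)" for i
    have "z \<in> tup (Suc n)" using cat_tup[of p "n - p" x y] p by (simp add: z_def)
    then have coc: "(\<Sum>j\<le>Suc n. sgn_pow j (F j)) = 0"
      using assms(3) by (simp add: hdiff_def F_def)
    have Hpart: "d_h (p - 1) (c (p - 1)) x y = sgn_pow p (\<Sum>i\<le>p. sgn_pow i (F i))"
      if p1: "1 \<le> p"
    proof -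
      obtain p' where p': "p = Suc p'" using p1 by (cases p) auto
      have "d_h (p - 1) (c (p - 1)) x y
          = (\<Sum>i\<le>Suc p'. sgn_pow i (sgn_pow (Suc p') (f (cat p' (m - p') (face p' i x) y))))"
        by (simp add: d_h_def c_def p')
      also have "\<dots> = (\<Sum>i\<le>Suc p'. sgn_pow i (sgn_pow p (F i)))"
      proof (rule sum.cong[OF refl])
        fix i assume i: "i \<in> {..Suc p'}"
        have "cat p' (m - p') (face p' i x) y = face n i (cat (Suc p') (m - p') x y)"
          by (rule face_cat_left) (use i p p' n in auto)
        also have "cat (Suc p') (m - p') x y = z" using p' n by (simp add: z_def)
        finally show "sgn_pow i (sgn_pow (Suc p') (f (cat p' (m - p') (face p' i x) y)))
                      = sgn_pow i (sgn_pow p (F i))" by (simp add: F_def p')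
      qed
      also have "\<dots> = sgn_pow p (\<Sum>i\<le>p. sgn_pow i (F i))"
        unfolding p' sgn_pow_sum by (rule sum.cong[OF refl], rule sgn_pow_comm)
      finally show ?thesis .
    qed
    have Vpart: "d_v p (m - p) (c p) x y = sgn_pow p (\<Sum>i\<le>n - p. sgn_pow (Suc p + i) (F (Suc p + i)))"
      if "p \<le> m"
    proof -
      have "d_v p (m - p) (c p) x y
          = sgn_pow p (\<Sum>i\<le>Suc (m - p). sgn_pow i (sgn_pow (Suc p) (f (cat p (m - p) x (face (m - p) i y)))))"
        by (simp add: d_v_def c_def)
      also have "\<dots> = sgn_pow p (\<Sum>i\<le>n - p. sgn_pow (Suc p + i) (F (Suc p + i)))"
      proof -
        have ix: "Suc (m - p) = n - p" using that n by simp
        have "(\<Sum>i\<le>Suc (m - p). sgn_pow i (sgn_pow (Suc p) (f (cat p (m - p) x (face (m - p) i y)))))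
            = (\<Sum>i\<le>n - p. sgn_pow (Suc p + i) (F (Suc p + i)))"
          unfolding ix
        proof (rule sum.cong[OF refl])
          fix i assume i: "i \<in> {..n - p}"
          have "cat p (m - p) x (face (m - p) i y) = face n (Suc p + i) (cat p (Suc (m - p)) x y)"
            by (rule face_cat_right) (use i that n in auto)
          also have "cat p (Suc (m - p)) x y = z" using ix by (simp add: z_def)
          finally show "sgn_pow i (sgn_pow (Suc p) (f (cat p (m - p) x (face (m - p) i y))))
                        = sgn_pow (Suc p + i) (F (Suc p + i))"
            by (simp add: F_def sgn_pow_add[symmetric] add.commute)
        qed
        then show ?thesis by simp
      qed
      finally show ?thesis .
    qed
    consider "p = 0" | "p = n" | "1 \<le> p" "p \<le> m" using p n by linarith
    then show "j_v n f p x y - j_h n (incl f) p x y = totD m c p x y"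
    proof cases
      case 1
      have split: "(\<Sum>j\<le>Suc n. sgn_pow j (F j)) = F 0 + (\<Sum>i\<le>n. sgn_pow (Suc i) (F (Suc i)))"
        using sum_split_at[of 0 n "\<lambda>j. sgn_pow j (F j)"] by simp
      have F0: "F 0 = f y"
        using face_cat_0[of y n x] y 1 by (simp add: F_def z_def)
      have "totD m c p x y = (\<Sum>i\<le>n. sgn_pow (Suc i) (F (Suc i)))"
        using Vpart 1 by (simp add: totD_def)
      also have "\<dots> = - f y" using split coc F0 by (simp add: add_eq_0_iff)
      finally show ?thesis using 1 n by (simp add: j_v_def j_h_def incl_def)
    next
      case 2
      have split: "(\<Sum>j\<le>Suc n. sgn_pow j (F j)) = (\<Sum>j\<le>n. sgn_pow j (F j)) + sgn_pow (Suc n) (F (Suc n))"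
        using sum_split_at[of n n "\<lambda>j. sgn_pow j (F j)"] by simp
      have Fn: "F (Suc n) = f x"
        using face_cat_last[of x n y] x 2 by (simp add: F_def z_def)
      have L: "(\<Sum>j\<le>n. sgn_pow j (F j)) = sgn_pow n (f x)"
        using split coc Fn by (simp add: sgn_pow_Suc add_eq_0_iff)
      have "totD m c p x y = sgn_pow n (\<Sum>j\<le>n. sgn_pow j (F j))"
        using Hpart 2 n by (simp add: totD_def)
      also have "\<dots> = f x" unfolding L by (simp add: sgn_pow_def)
      finally show ?thesis using 2 n by (simp add: j_v_def j_h_def incl_def)
    next
      case 3
      have split: "(\<Sum>j\<le>Suc n. sgn_pow j (F j)) = (\<Sum>j\<le>p. sgn_pow j (F j))
                     + (\<Sum>i\<le>n - p. sgn_pow (Suc p + i) (F (Suc p + i)))"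
        using sum_split_at[of p n "\<lambda>j. sgn_pow j (F j)"] p by simp
      have "totD m c p x y = sgn_pow p (\<Sum>j\<le>p. sgn_pow j (F j))
               + sgn_pow p (\<Sum>i\<le>n - p. sgn_pow (Suc p + i) (F (Suc p + i)))"
        using Hpart Vpart 3 by (simp add: totD_def)
      also have "\<dots> = 0" using split coc by (simp add: sgn_pow_plus[symmetric])
      finally show ?thesis using 3 n by (simp add: j_v_def j_h_def incl_def)
    qed
  qed
  show ?thesis
    unfolding cohomologous_def using n cT main by auto
qed

end
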